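(* Let $A$ be a nonempty finite set with $|A|=n$ and $\Sigma\in\mathbb{R}$. Define $\varphi$ on metrics $d$ on $A$ by $\varphi(d)(x,y)=d(x,\cdot)+d(y,\cdot)-d(x,y)-d(\cdot,\cdot)+\Sigma/n$, and $\psi$ on $\Sigma$-proximities $\sigma$ on $A$ by $\psi(\sigma)(x,y)=\tfrac12(\sigma(x,x)+\sigma(y,y))-\sigma(x,y)$. Then $\psi(\varphi(d))=d$ for every metric $d$ on $A$, and $\varphi(\psi(\sigma))=\sigma$ for every $\Sigma$-proximity $\sigma$ on $A$.
   Context: A metric on $A$ is a function $d:A^2\to\mathbb{R}$ such that for all $x,y,z\in A$: $d(x,y)=0$ iff $x=y$, and $d(x,y)+d(x,z)-d(y,z)\ge 0$. Notation: $d(x,\cdot)=\frac1n\sum_{t\in A}d(x,t)$, $d(\cdot,\cdot)=\frac1{n^2}\sum_{s,t\in A}d(s,t)$ (and likewise for any function on $A^2$). A function $\sigma:A^2\to\mathbb{R}$ is a $\Sigma$-proximity on $A$ if for all $x,y,z\in A$: (1) $\sum_{t\in A}\sigma(x,t)=\Sigma$; (2) $\sigma(x,y)+\sigma(x,z)-\sigma(y,z)\le\sigma(x,x)$, with strict inequality whenever $z=y$ and $x\ne y$. *)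

theory Defs
  imports Complex_Main
begin

definition metric_on :: "'a set \<Rightarrow> ('a \<Rightarrow> 'a \<Rightarrow> real) \<Rightarrow> bool" where
  "metric_on A d \<longleftrightarrow>
     (\<forall>x\<in>A. \<forall>y\<in>A. d x y = 0 \<longleftrightarrow> x = y) \<and>
     (\<forall>x\<in>A. \<forall>y\<in>A. \<forall>z\<in>A. d x y + d x z - d y z \<ge> 0)"

definition proximity_on :: "'a set \<Rightarrow> real \<Rightarrow> ('a \<Rightarrow> 'a \<Rightarrow> real) \<Rightarrow> bool" where
  "proximity_on A S \<sigma> \<longleftrightarrow>
     (\<forall>x\<in>A. (\<Sum>t\<in>A. \<sigma> x t) = S) \<and>
     (\<forall>x\<in>A. \<forall>y\<in>A. \<forall>z\<in>A. \<sigma> x y + \<sigma> x z - \<sigma> y z \<le> \<sigma> x x) \<and>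
     (\<forall>x\<in>A. \<forall>y\<in>A. x \<noteq> y \<longrightarrow> \<sigma> x y + \<sigma> x y - \<sigma> y y < \<sigma> x x)"

definition avg1 :: "'a set \<Rightarrow> ('a \<Rightarrow> 'a \<Rightarrow> real) \<Rightarrow> 'a \<Rightarrow> real" where
  "avg1 A d x = (\<Sum>t\<in>A. d x t) / real (card A)"

definition avg2 :: "'a set \<Rightarrow> ('a \<Rightarrow> 'a \<Rightarrow> real) \<Rightarrow> real" where
  "avg2 A d = (\<Sum>s\<in>A. \<Sum>t\<in>A. d s t) / (real (card A))^2"

definition phi :: "'a set \<Rightarrow> real \<Rightarrow> ('a \<Rightarrow> 'a \<Rightarrow> real) \<Rightarrow> ('a \<Rightarrow> 'a \<Rightarrow> real)" where
  "phi A S d = (\<lambda>x y. avg1 A d x + avg1 A d y - d x y - avg2 A d + S / real (card A))"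

definition psi :: "('a \<Rightarrow> 'a \<Rightarrow> real) \<Rightarrow> ('a \<Rightarrow> 'a \<Rightarrow> real)" where
  "psi \<sigma> = (\<lambda>x y. (\<sigma> x x + \<sigma> y y) / 2 - \<sigma> x y)"

end

theory Submission
  imports Defs
begin

lemma aux1: "((a::real) + a - 0 - m + c + (b + b - 0 - m + c)) / 2 - (a + b - e - m + c) = e"
  by (simp add: field_simps)

theorem lemma1:
  fixes A :: "'a set" and S :: real
  assumes "finite A" and "A \<noteq> {}"
  shows "(\<forall>d. metric_on A d \<longrightarrow> (\<forall>x\<in>A. \<forall>y\<in>A. psi (phi A S d) x y = d x y))
       \<and> (\<forall>\<sigma>. proximity_on A S \<sigma> \<longrightarrow> (\<forall>x\<in>A. \<forall>y\<in>A. phi A S (psi \<sigma>) x y = \<sigma> x y))"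
proof (intro conjI allI impI ballI)
  fix d x y assume m: "metric_on A d" and x: "x \<in> A" and y: "y \<in> A"
  have "d x x = 0" "d y y = 0" using m x y unfolding metric_on_def by auto
  then show "psi (phi A S d) x y = d x y" unfolding psi_def phi_def
    using aux1[of "avg1 A d x" "avg2 A d" "S / real (card A)" "avg1 A d y" "d x y"] by simp
next
  fix \<sigma> x y assume p: "proximity_on A S \<sigma>" and x: "x \<in> A" and y: "y \<in> A"
  define n where "n = real (card A)"
  have n0: "n > 0" using assms unfolding n_def by auto
  define T where "T = (\<Sum>t\<in>A. \<sigma> t t)"
  have row: "\<And>u. u \<in> A \<Longrightarrow> (\<Sum>t\<in>A. \<sigma> u t) = S" using p unfolding proximity_on_def by auto
  have s1: "(\<Sum>t\<in>A. psi \<sigma> u t) = n * \<sigma> u u / 2 + T / 2 - S" if "u \<in> A" for u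
  proof -
    have "(\<Sum>t\<in>A. psi \<sigma> u t) = (\<Sum>t\<in>A. \<sigma> u u / 2) + (\<Sum>t\<in>A. \<sigma> t t) / 2 - (\<Sum>t\<in>A. \<sigma> u t)"
      unfolding psi_def by (simp add: sum.distrib sum_subtractf sum_divide_distrib add_divide_distrib)
    then show ?thesis using row[OF that] unfolding n_def T_def by simp
  qed
  have a1: "avg1 A (psi \<sigma>) u = \<sigma> u u / 2 + T / (2*n) - S / n" if "u \<in> A" for u
    unfolding avg1_def n_def[symmetric] s1[OF that] using n0 by (simp add: field_simps)
  have "(\<Sum>s\<in>A. \<Sum>t\<in>A. psi \<sigma> s t) = (\<Sum>s\<in>A. n * \<sigma> s s / 2 + T / 2 - S)"
    using s1 by (rule sum.cong[OF refl])
  also have "\<dots> = n * T / 2 + n * T / 2 - n * S"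
    by (simp add: sum.distrib sum_subtractf sum_divide_distrib[symmetric] sum_distrib_left[symmetric] T_def n_def)
  finally have a2: "avg2 A (psi \<sigma>) = T / n - S / n"
    unfolding avg2_def using n0 by (simp add: n_def[symmetric] field_simps power2_eq_square)
  show "phi A S (psi \<sigma>) x y = \<sigma> x y"
    unfolding phi_def a1[OF x] a1[OF y] a2 n_def[symmetric] using n0
    by (simp add: psi_def field_simps)
qed

end
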